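(* Consider a mean field game with finite state space $\mathcal{S}$, finite action space $\mathcal{A}$, transition rates $Q_{ija}(m)$, rewards $r_{ia}(m)$ and discount factor $\beta\in(0,1)$ satisfying the standing assumptions in the context. Let $\bar m\in\mathcal{P}(\mathcal{S})$ and let $d$ be a deterministic stationary strategy with $\mathcal{D}(\bar m)=\{d\}$. Then there is $\epsilon>0$ such that $\mathcal{D}(m')=\{d\}$ for all $m'\in\mathcal{P}(\mathcal{S})$ with $\|m'-\bar m\|<\epsilon$.
   Context: $\mathcal{S}=\{1,\dots,S\}$, $\mathcal{A}=\{1,\dots,A\}$, $\mathcal{P}(\mathcal{S})$ is the probability simplex in $\mathbb{R}^S$. For each $a$ and $m$, $(Q_{ija}(m))_{i,j}$ is a conservative generator ($Q_{ija}(m)\ge0$ for $i\neq j$, rows sum to $0$); each $m\mapsto Q_{ija}(m)$ is Lipschitz continuous and each $m\mapsto r_{ia}(m)$ is continuous on $\mathcal{P}(\mathcal{S})$. A deterministic stationary strategy is a map $d:\mathcal{S}\to\mathcal{A}$. For fixed $m$, $V^\ast(m)\in\mathbb{R}^S$ is the unique solution of $\beta V_i=\max_{a}\{r_{ia}(m)+\sum_jQ_{ija}(m)V_j\}$ (the optimal value of the discounted continuous-time MDP with constant rates $Q_{ija}(m)$ and rewards $r_{ia}(m)$). $O_i(m)=\operatorname{argmax}_{a}\{r_{ia}(m)+\sum_jQ_{ija}(m)V^\ast_j(m)\}$ and $\mathcal{D}(m)=\{d:\mathcal{S}\to\mathcal{A}: d(i)\in O_i(m)\ \forall i\}$. *)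

theory Defs
  imports "HOL-Analysis.Analysis"
begin

definition prob_simplex :: "(real^'s::finite) set" where
  "prob_simplex = {m. (\<forall>i. m $ i \<ge> 0) \<and> (\<Sum>i\<in>UNIV. m $ i) = 1}"

definition bellman_term ::
  "((real^'s) \<Rightarrow> 's \<Rightarrow> 's \<Rightarrow> 'a \<Rightarrow> real) \<Rightarrow> ((real^'s) \<Rightarrow> 's \<Rightarrow> 'a \<Rightarrow> real)
   \<Rightarrow> real^'s \<Rightarrow> ('s::finite \<Rightarrow> real) \<Rightarrow> 's \<Rightarrow> 'a \<Rightarrow> real" where
  "bellman_term Q r m V i a = r m i a + (\<Sum>j\<in>UNIV. Q m i j a * V j)"

definition opt_value ::
  "((real^'s) \<Rightarrow> 's \<Rightarrow> 's \<Rightarrow> 'a::finite \<Rightarrow> real) \<Rightarrow> ((real^'s) \<Rightarrow> 's \<Rightarrow> 'a \<Rightarrow> real)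
   \<Rightarrow> real \<Rightarrow> real^'s \<Rightarrow> ('s::finite \<Rightarrow> real)" where
  "opt_value Q r \<beta> m = (THE V. \<forall>i. \<beta> * V i = (MAX a\<in>UNIV. bellman_term Q r m V i a))"

definition opt_actions ::
  "((real^'s) \<Rightarrow> 's \<Rightarrow> 's \<Rightarrow> 'a::finite \<Rightarrow> real) \<Rightarrow> ((real^'s) \<Rightarrow> 's \<Rightarrow> 'a \<Rightarrow> real)
   \<Rightarrow> real \<Rightarrow> real^'s \<Rightarrow> 's::finite \<Rightarrow> 'a set" where
  "opt_actions Q r \<beta> m i =
     {a. \<forall>b. bellman_term Q r m (opt_value Q r \<beta> m) i b \<le> bellman_term Q r m (opt_value Q r \<beta> m) i a}"

definition opt_strategies ::
  "((real^'s) \<Rightarrow> 's \<Rightarrow> 's \<Rightarrow> 'a::finite \<Rightarrow> real) \<Rightarrow> ((real^'s) \<Rightarrow> 's \<Rightarrow> 'a \<Rightarrow> real)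
   \<Rightarrow> real \<Rightarrow> real^'s \<Rightarrow> ('s::finite \<Rightarrow> 'a) set" where
  "opt_strategies Q r \<beta> m = {d. \<forall>i. d i \<in> opt_actions Q r \<beta> m i}"

end

theory Submission
  imports Defs
begin


definition sn :: "real^'s::finite \<Rightarrow> real" where
  "sn x = Max (range (\<lambda>i. \<bar>x$i\<bar>))"

lemma sn_ge: "\<bar>x$i\<bar> \<le> sn x"
  unfolding sn_def by (rule Max_ge) auto

lemma sn_le: "(\<And>i. \<bar>x$i\<bar> \<le> c) \<Longrightarrow> sn x \<le> c"
  unfolding sn_def by (subst Max_le_iff) auto

lemma sn_nonneg: "0 \<le> sn x"
  using sn_ge[of x] abs_ge_zero order_trans by blast

lemma sn_le_dist: "sn (x - y) \<le> dist x y"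
  by (rule sn_le) (metis component_le_norm_cart dist_norm)

lemma dist_le_sn: "dist x y \<le> real CARD('s) * sn (x - y)" for x y :: "real^'s::finite"
proof -
  have "dist x y \<le> (\<Sum>i\<in>UNIV. \<bar>(x-y)$i\<bar>)" using norm_le_l1_cart dist_norm by metis
  also have "\<dots> \<le> (\<Sum>i\<in>(UNIV::'s set). sn (x - y))" by (rule sum_mono) (rule sn_ge)
  also have "\<dots> = real CARD('s) * sn (x - y)" by simp
  finally show ?thesis .
qed

lemma max_diff:
  fixes f g :: "'a::finite \<Rightarrow> real"
  assumes "\<And>a. \<bar>f a - g a\<bar> \<le> c"
  shows "\<bar>(MAX a. f a) - (MAX a. g a)\<bar> \<le> c"
proof -
  have "(MAX a. f a) \<le> (MAX a. g a) + c"
  proof (subst Max_le_iff, simp_all, intro allI)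
    fix a have "f a \<le> g a + c" using assms[of a] by auto
    also have "g a \<le> (MAX a. g a)" by (rule Max_ge) auto
    finally show "f a \<le> (MAX a. g a) + c" by simp
  qed
  moreover have "(MAX a. g a) \<le> (MAX a. f a) + c"
  proof (subst Max_le_iff, simp_all, intro allI)
    fix a have "g a \<le> f a + c" using assms[of a] by auto
    also have "f a \<le> (MAX a. f a)" by (rule Max_ge) auto
    finally show "g a \<le> (MAX a. f a) + c" by simp
  qed
  ultimately show ?thesis by linarith
qed

definition TT where
  "TT Q r \<beta> lam m x = (\<chi> i. (MAX a. bellman_term Q r m (vec_nth x) i a + lam * x$i) / (\<beta> + lam))"

lemma TT_nth: "TT Q r \<beta> lam m x $ i = (MAX a. bellman_term Q r m (vec_nth x) i a + lam * x$i) / (\<beta> + lam)"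
  unfolding TT_def by simp

definition good where
  "good Q m lam \<longleftrightarrow> lam > 0 \<and> (\<forall>i j a. i \<noteq> j \<longrightarrow> Q m i j a \<ge> 0) \<and> (\<forall>i a. (\<Sum>j\<in>UNIV. Q m i j a) = 0)
     \<and> (\<forall>i a. Q m i i a + lam \<ge> 0)"

lemma bt_diff:
  fixes Q :: "real^'s::finite \<Rightarrow> 's \<Rightarrow> 's \<Rightarrow> 'a::finite \<Rightarrow> real"
  assumes g: "good Q m lam"
  shows "\<bar>(bellman_term Q r m (vec_nth x) i a + lam * x$i) - (bellman_term Q r m (vec_nth y) i a + lam * y$i)\<bar>
     \<le> lam * sn (x - y)"
proof -
  define P where "P j = Q m i j a + (if j = i then lam else 0)" for j
  have P0: "P j \<ge> 0" for j using g unfolding good_def P_def by (cases "j = i") auto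
  have Ps: "(\<Sum>j\<in>UNIV. P j) = lam"
    using g unfolding good_def P_def by (simp add: sum.distrib)
  have eq: "(bellman_term Q r m (vec_nth x) i a + lam * x$i) - (bellman_term Q r m (vec_nth y) i a + lam * y$i)
     = (\<Sum>j\<in>UNIV. P j * (x - y)$j)"
  proof -
    have "(\<Sum>j\<in>UNIV. P j * (x - y)$j) = (\<Sum>j\<in>UNIV. Q m i j a * (x - y)$j + (if j = i then lam * (x-y)$j else 0))"
      unfolding P_def by (rule sum.cong) (auto simp: algebra_simps)
    also have "\<dots> = (\<Sum>j\<in>UNIV. Q m i j a * x$j) - (\<Sum>j\<in>UNIV. Q m i j a * y$j) + lam * (x$i - y$i)"
      by (simp add: sum.distrib sum_subtractf algebra_simps)
    finally show ?thesis unfolding bellman_term_def by (simp add: algebra_simps)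
  qed
  have "\<bar>\<Sum>j\<in>UNIV. P j * (x - y)$j\<bar> \<le> (\<Sum>j\<in>UNIV. \<bar>P j * (x - y)$j\<bar>)" by (rule sum_abs)
  also have "\<dots> \<le> (\<Sum>j\<in>UNIV. P j * sn (x - y))"
  proof (rule sum_mono)
    fix j show "\<bar>P j * (x - y)$j\<bar> \<le> P j * sn (x - y)"
      using sn_ge[of "x-y" j] P0[of j] by (simp add: abs_mult mult_left_mono del: vector_minus_component)
  qed
  also have "\<dots> = lam * sn (x - y)" using Ps by (metis sum_distrib_right)
  finally show ?thesis using eq by simp
qed

lemma TT_contr:
  fixes Q :: "real^'s::finite \<Rightarrow> 's \<Rightarrow> 's \<Rightarrow> 'a::finite \<Rightarrow> real"
  assumes g: "good Q m lam" and b: "\<beta> > 0"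
  shows "sn (TT Q r \<beta> lam m x - TT Q r \<beta> lam m y) \<le> lam / (\<beta> + lam) * sn (x - y)"
proof (rule sn_le)
  fix i
  have lp: "lam > 0" using g unfolding good_def by auto
  have "\<bar>(MAX a. bellman_term Q r m (vec_nth x) i a + lam * x$i) - (MAX a. bellman_term Q r m (vec_nth y) i a + lam * y$i)\<bar>
     \<le> lam * sn (x - y)"
    using max_diff[of "\<lambda>a. bellman_term Q r m (vec_nth x) i a + lam * x$i" "\<lambda>a. bellman_term Q r m (vec_nth y) i a + lam * y$i", OF bt_diff[OF g]] .
  then show "\<bar>(TT Q r \<beta> lam m x - TT Q r \<beta> lam m y) $ i\<bar> \<le> lam / (\<beta> + lam) * sn (x - y)"
    using lp b by (simp add: TT_nth diff_divide_distrib[symmetric] abs_divide divide_right_mono)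
qed



lemma TT_pow_contr:
  fixes Q :: "real^'s::finite \<Rightarrow> 's \<Rightarrow> 's \<Rightarrow> 'a::finite \<Rightarrow> real"
  assumes g: "good Q m lam" and b: "\<beta> > 0"
  shows "sn ((TT Q r \<beta> lam m ^^ k) x - (TT Q r \<beta> lam m ^^ k) y) \<le> (lam / (\<beta> + lam))^k * sn (x - y)"
proof (induction k)
  case 0 then show ?case by simp
next
  case (Suc k)
  have lp: "lam > 0" using g unfolding good_def by auto
  have "sn ((TT Q r \<beta> lam m ^^ Suc k) x - (TT Q r \<beta> lam m ^^ Suc k) y)
     \<le> lam / (\<beta> + lam) * sn ((TT Q r \<beta> lam m ^^ k) x - (TT Q r \<beta> lam m ^^ k) y)"
    using TT_contr[OF g b] by simp
  also have "\<dots> \<le> lam / (\<beta> + lam) * ((lam / (\<beta> + lam))^k * sn (x - y))"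
    using Suc lp b by (intro mult_left_mono) auto
  finally show ?case by simp
qed

lemma TT_fix_exists:
  fixes Q :: "real^'s::finite \<Rightarrow> 's \<Rightarrow> 's \<Rightarrow> 'a::finite \<Rightarrow> real"
  assumes g: "good Q m lam" and b: "\<beta> > 0"
  shows "\<exists>x. TT Q r \<beta> lam m x = x"
proof -
  have lp: "lam > 0" using g unfolding good_def by auto
  define \<kappa> where "\<kappa> = lam / (\<beta> + lam)"
  have k0: "0 \<le> \<kappa>" and k1: "\<kappa> < 1" using lp b unfolding \<kappa>_def by auto
  define n where "n = real CARD('s)"
  have n0: "n > 0" unfolding n_def by simp
  obtain k where kk: "\<kappa> ^ k < 1 / n" using real_arch_pow_inv[of "1/n" \<kappa>] n0 k1 by auto
  define f where "f = TT Q r \<beta> lam m ^^ k"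
  have c1: "n * \<kappa>^k < 1" using kk n0 by (simp add: field_simps)
  have "\<exists>!x. f x = x"
  proof (rule banach_fix_type[of "n * \<kappa>^k"])
    show "0 \<le> n * \<kappa>^k" using n0 k0 by simp
    show "n * \<kappa>^k < 1" by fact
    show "\<forall>x y. dist (f x) (f y) \<le> n * \<kappa> ^ k * dist x y"
    proof (intro allI)
      fix x y
      have "dist (f x) (f y) \<le> n * sn (f x - f y)" using dist_le_sn n_def by metis
      also have "\<dots> \<le> n * (\<kappa>^k * sn (x - y))"
        using TT_pow_contr[OF g b, of k r x y] n0 unfolding f_def \<kappa>_def by (intro mult_left_mono) auto
      also have "\<dots> \<le> n * (\<kappa>^k * dist x y)"
        using sn_le_dist[of x y] n0 k0 by (intro mult_left_mono) auto
      finally show "dist (f x) (f y) \<le> n * \<kappa> ^ k * dist x y" by simp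
    qed
  qed
  then obtain x where fx: "f x = x" and un: "\<And>y. f y = y \<Longrightarrow> y = x" by blast
  have "f (TT Q r \<beta> lam m x) = TT Q r \<beta> lam m (f x)" unfolding f_def by (simp add: funpow_swap1)
  then have "f (TT Q r \<beta> lam m x) = TT Q r \<beta> lam m x" using fx by simp
  then have "TT Q r \<beta> lam m x = x" using un by blast
  then show ?thesis by blast
qed

lemma TT_fix_iff:
  fixes Q :: "real^'s::finite \<Rightarrow> 's \<Rightarrow> 's \<Rightarrow> 'a::finite \<Rightarrow> real"
  assumes "\<beta> + lam > 0"
  shows "TT Q r \<beta> lam m x = x \<longleftrightarrow> (\<forall>i. \<beta> * x$i = (MAX a. bellman_term Q r m (vec_nth x) i a))"
proof -
  have "TT Q r \<beta> lam m x $ i = ((MAX a. bellman_term Q r m (vec_nth x) i a) + lam * x$i) / (\<beta> + lam)" for i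
    unfolding TT_nth by (subst Max_add_commute) auto
  then have "TT Q r \<beta> lam m x $ i = x $ i \<longleftrightarrow> \<beta> * x$i = (MAX a. bellman_term Q r m (vec_nth x) i a)" for i
    using assms by (auto simp: nonzero_divide_eq_eq ring_distribs mult.commute)
  then show ?thesis by (auto simp: vec_eq_iff)
qed

lemma opt_value_eq:
  fixes Q :: "real^'s::finite \<Rightarrow> 's \<Rightarrow> 's \<Rightarrow> 'a::finite \<Rightarrow> real"
  assumes g: "good Q m lam" and b: "\<beta> > 0" and fx: "TT Q r \<beta> lam m x = x"
  shows "opt_value Q r \<beta> m = vec_nth x"
proof -
  have lp: "lam > 0" using g unfolding good_def by auto
  have bl: "\<beta> + lam > 0" using lp b by simp
  show ?thesis unfolding opt_value_def
  proof (rule the_equality)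
    show "\<forall>i. \<beta> * x $ i = (MAX a. bellman_term Q r m (vec_nth x) i a)"
      using fx TT_fix_iff[OF bl] by blast
  next
    fix V assume V: "\<forall>i. \<beta> * V i = (MAX a. bellman_term Q r m V i a)"
    define y where "y = vec_lambda V"
    have Vy: "vec_nth y = V" unfolding y_def by (simp add: ext)
    have fy: "TT Q r \<beta> lam m y = y" using TT_fix_iff[OF bl, of Q r m y] V Vy by simp
    have h: "sn (x - y) \<le> lam / (\<beta> + lam) * sn (x - y)" using TT_contr[OF g b, of r x y] fx fy by simp
    have k1: "lam / (\<beta> + lam) < 1" using lp b by simp
    have "sn (x - y) * (1 - lam / (\<beta> + lam)) \<le> 0" using h by (simp add: algebra_simps)
    then have "sn (x - y) \<le> 0" using k1 by (simp add: mult_le_0_iff)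
    then have "\<bar>(x - y)$i\<bar> \<le> 0" for i using sn_ge[of "x - y" i] by linarith
    then have "x = y" by (simp add: vec_eq_iff)
    then show "V = vec_nth x" using Vy by simp
  qed
qed



lemma sn_tri: "sn (x - z) \<le> sn (x - y) + sn (y - z)"
proof (rule sn_le)
  fix i
  have "\<bar>(x - z)$i\<bar> \<le> \<bar>(x - y)$i\<bar> + \<bar>(y - z)$i\<bar>" by simp
  also have "\<dots> \<le> sn (x - y) + sn (y - z)" using sn_ge by (metis add_mono)
  finally show "\<bar>(x - z)$i\<bar> \<le> sn (x - y) + sn (y - z)" .
qed

lemma TT_m_diff:
  fixes Q :: "real^'s::finite \<Rightarrow> 's \<Rightarrow> 's \<Rightarrow> 'a::finite \<Rightarrow> real"
  assumes "\<beta> + lam > 0"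
  shows "sn (TT Q r \<beta> lam m W - TT Q r \<beta> lam m0 W) \<le>
    (\<Sum>i\<in>UNIV. \<Sum>a\<in>UNIV. \<bar>bellman_term Q r m (vec_nth W) i a - bellman_term Q r m0 (vec_nth W) i a\<bar>) / (\<beta> + lam)"
    (is "_ \<le> ?D / _")
proof (rule sn_le)
  fix i
  have "\<bar>bellman_term Q r m (vec_nth W) i a + lam * W$i - (bellman_term Q r m0 (vec_nth W) i a + lam * W$i)\<bar> \<le> ?D" for a
  proof -
    have "\<bar>bellman_term Q r m (vec_nth W) i a - bellman_term Q r m0 (vec_nth W) i a\<bar>
       \<le> (\<Sum>a\<in>UNIV. \<bar>bellman_term Q r m (vec_nth W) i a - bellman_term Q r m0 (vec_nth W) i a\<bar>)"
      by (rule member_le_sum) auto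
    also have "\<dots> \<le> ?D"
      by (rule member_le_sum[of i UNIV "\<lambda>i. \<Sum>a\<in>UNIV. \<bar>bellman_term Q r m (vec_nth W) i a - bellman_term Q r m0 (vec_nth W) i a\<bar>"])
         (auto intro: sum_nonneg)
    finally show ?thesis by simp
  qed
  then have "\<bar>(MAX a. bellman_term Q r m (vec_nth W) i a + lam * W$i) - (MAX a. bellman_term Q r m0 (vec_nth W) i a + lam * W$i)\<bar> \<le> ?D"
    by (rule max_diff)
  then show "\<bar>(TT Q r \<beta> lam m W - TT Q r \<beta> lam m0 W) $ i\<bar> \<le> ?D / (\<beta> + lam)"
    using assms by (simp add: TT_nth diff_divide_distrib[symmetric] abs_divide divide_right_mono)
qed

lemma fix_dist:
  fixes Q :: "real^'s::finite \<Rightarrow> 's \<Rightarrow> 's \<Rightarrow> 'a::finite \<Rightarrow> real"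
  assumes g: "good Q m lam" and b: "\<beta> > 0"
    and fV: "TT Q r \<beta> lam m V = V" and fW: "TT Q r \<beta> lam m0 W = W"
  shows "sn (V - W) \<le>
    (\<Sum>i\<in>UNIV. \<Sum>a\<in>UNIV. \<bar>bellman_term Q r m (vec_nth W) i a - bellman_term Q r m0 (vec_nth W) i a\<bar>) / \<beta>"
    (is "_ \<le> ?D / _")
proof -
  have lp: "lam > 0" using g unfolding good_def by auto
  have "sn (V - W) \<le> sn (TT Q r \<beta> lam m V - TT Q r \<beta> lam m W) + sn (TT Q r \<beta> lam m W - TT Q r \<beta> lam m0 W)"
    using sn_tri[of "TT Q r \<beta> lam m V" "TT Q r \<beta> lam m0 W" "TT Q r \<beta> lam m W"] fV fW by simp
  also have "\<dots> \<le> lam / (\<beta> + lam) * sn (V - W) + ?D / (\<beta> + lam)"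
    using TT_contr[OF g b, of r V W] TT_m_diff[of \<beta> lam Q r m W m0] lp b by simp
  finally have h: "sn (V - W) \<le> lam / (\<beta> + lam) * sn (V - W) + ?D / (\<beta> + lam)" .
  have "(\<beta> + lam) * sn (V - W) \<le> (\<beta> + lam) * (lam / (\<beta> + lam) * sn (V - W) + ?D / (\<beta> + lam))"
    using h lp b by (intro mult_left_mono) auto
  also have "\<dots> = lam * sn (V - W) + ?D"
  proof -
    have c: "\<beta> + lam \<noteq> 0" using lp b by simp
    have "\<And>c s D. c \<noteq> 0 \<Longrightarrow> c * (lam / c * s + D / c) = lam * s + (D::real)" by (simp add: field_simps)
    from this[OF c] show ?thesis .
  qed
  finally have "\<beta> * sn (V - W) \<le> ?D" by (simp add: algebra_simps)
  then show ?thesis using b by (simp add: field_simps)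
qed



theorem lemma4p1:
  fixes Q :: "(real^'s::finite) \<Rightarrow> 's \<Rightarrow> 's \<Rightarrow> 'a::finite \<Rightarrow> real"
    and r :: "(real^'s) \<Rightarrow> 's \<Rightarrow> 'a \<Rightarrow> real"
    and \<beta> :: real
    and mbar :: "real^'s"
    and d :: "'s \<Rightarrow> 'a"
  assumes beta: "0 < \<beta>" "\<beta> < 1"
    and Q_offdiag: "\<And>m i j a. m \<in> prob_simplex \<Longrightarrow> i \<noteq> j \<Longrightarrow> Q m i j a \<ge> 0"
    and Q_rows: "\<And>m i a. m \<in> prob_simplex \<Longrightarrow> (\<Sum>j\<in>UNIV. Q m i j a) = 0"
    and Q_lip: "\<And>i j a. \<exists>L. L-lipschitz_on prob_simplex (\<lambda>m. Q m i j a)"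
    and r_cont: "\<And>i a. continuous_on prob_simplex (\<lambda>m. r m i a)"
    and mbar: "mbar \<in> prob_simplex"
    and unique: "opt_strategies Q r \<beta> mbar = {d}"
  shows "\<exists>\<epsilon>>0. \<forall>m'\<in>prob_simplex. norm (m' - mbar) < \<epsilon> \<longrightarrow> opt_strategies Q r \<beta> m' = {d}"
proof -
  define F where "F = at mbar within (prob_simplex :: (real^'s) set)"
  have b: "\<beta> > 0" using beta by simp
  have hQ: "((\<lambda>m. Q m i j a) \<longlongrightarrow> Q mbar i j a) F" for i j a
  proof -
    obtain L where "L-lipschitz_on prob_simplex (\<lambda>m. Q m i j a)" using Q_lip by blast
    then have "continuous_on prob_simplex (\<lambda>m. Q m i j a)" by (rule lipschitz_on_continuous_on)
    then show ?thesis using mbar unfolding F_def continuous_on_def by blast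
  qed
  have hr: "((\<lambda>m. r m i a) \<longlongrightarrow> r mbar i a) F" for i a
    using r_cont[of i a] mbar unfolding F_def continuous_on_def by blast
  have ev_s: "eventually (\<lambda>m. m \<in> prob_simplex) F"
    unfolding F_def by (simp add: eventually_at_filter)
  define lam0 where "lam0 = 1 + (\<Sum>p\<in>UNIV. \<bar>Q mbar (fst p) (fst p) (snd p)\<bar>)"
  have Qle: "\<bar>Q mbar i i a\<bar> \<le> lam0 - 1" for i a
    unfolding lam0_def using member_le_sum[of "(i,a)" UNIV "\<lambda>p. \<bar>Q mbar (fst p) (fst p) (snd p)\<bar>"] by simp
  have lam0: "lam0 > 0" unfolding lam0_def by (simp add: sum_nonneg add_pos_nonneg)
  have ev_Q: "eventually (\<lambda>m. \<forall>i a. Q m i i a > Q mbar i i a - 1) F"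
    by (intro eventually_all_finite) (rule order_tendstoD(1)[OF hQ], simp)
  have ev_good: "eventually (\<lambda>m. m \<in> prob_simplex \<and> good Q m lam0) F"
    using ev_s ev_Q
  proof eventually_elim
    case (elim m)
    have "Q m i i a + lam0 \<ge> 0" for i a proof -
      have "Q mbar i i a - 1 < Q m i i a" using elim(2) by blast
      then show ?thesis using Qle[of i a] by linarith
    qed
    then show ?case using elim(1) lam0 Q_offdiag[OF elim(1)] Q_rows[OF elim(1)] unfolding good_def by blast
  qed
  have gbar: "good Q mbar lam0"
  proof -
    have "Q mbar i i a + lam0 \<ge> 0" for i a using Qle[of i a] by linarith
    then show ?thesis unfolding good_def using lam0 Q_offdiag[OF mbar] Q_rows[OF mbar] by blast
  qed
  obtain W where fW: "TT Q r \<beta> lam0 mbar W = W" using TT_fix_exists[OF gbar b] by blast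
  have oW: "opt_value Q r \<beta> mbar = vec_nth W" using opt_value_eq[OF gbar b fW] .
  define \<delta> where "\<delta> m = (\<Sum>i\<in>UNIV. \<Sum>a\<in>UNIV. \<bar>bellman_term Q r m (vec_nth W) i a - bellman_term Q r mbar (vec_nth W) i a\<bar>)" for m
  have ev_bound: "eventually (\<lambda>m. \<forall>j. \<bar>opt_value Q r \<beta> m j - W$j\<bar> \<le> \<delta> m / \<beta>) F"
    using ev_good
  proof eventually_elim
    case (elim m)
    then have gm: "good Q m lam0" by simp
    obtain V where fV: "TT Q r \<beta> lam0 m V = V" using TT_fix_exists[OF gm b] by blast
    have oV: "opt_value Q r \<beta> m = vec_nth V" using opt_value_eq[OF gm b fV] .
    have "sn (V - W) \<le> \<delta> m / \<beta>" unfolding \<delta>_def by (rule fix_dist[OF gm b fV fW])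
    show ?case
    proof
      fix j
      have "\<bar>(V - W)$j\<bar> \<le> \<delta> m / \<beta>" using sn_ge[of "V - W" j] \<open>sn (V - W) \<le> \<delta> m / \<beta>\<close> by linarith
      then show "\<bar>opt_value Q r \<beta> m j - W$j\<bar> \<le> \<delta> m / \<beta>" using oV by simp
    qed
  qed
  have bt_lim: "((\<lambda>m. bellman_term Q r m V i a) \<longlongrightarrow> bellman_term Q r mbar V i a) F" for V i a
    unfolding bellman_term_def by (intro tendsto_intros hr hQ)
  have d_lim: "(\<delta> \<longlongrightarrow> 0) F"
  proof -
    have "(\<delta> \<longlongrightarrow> (\<Sum>i\<in>UNIV. \<Sum>a\<in>UNIV. \<bar>bellman_term Q r mbar (vec_nth W) i a - bellman_term Q r mbar (vec_nth W) i a\<bar>)) F"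
      unfolding \<delta>_def by (intro tendsto_intros bt_lim)
    then show ?thesis by simp
  qed
  have V_lim: "((\<lambda>m. opt_value Q r \<beta> m j) \<longlongrightarrow> W$j) F" for j
  proof -
    have "((\<lambda>m. opt_value Q r \<beta> m j - W$j) \<longlongrightarrow> 0) F"
    proof (rule Lim_null_comparison)
      show "eventually (\<lambda>m. norm (opt_value Q r \<beta> m j - W$j) \<le> \<delta> m / \<beta>) F"
        using ev_bound by (rule eventually_mono) simp
      show "((\<lambda>m. \<delta> m / \<beta>) \<longlongrightarrow> 0) F" using tendsto_divide_zero[OF d_lim] .
    qed
    then show ?thesis by (rule LIM_zero_cancel)
  qed
  have B_lim: "((\<lambda>m. bellman_term Q r m (opt_value Q r \<beta> m) i a) \<longlongrightarrow> bellman_term Q r mbar (vec_nth W) i a) F" for i a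
    unfolding bellman_term_def by (intro tendsto_intros hr hQ V_lim)
  have dopt: "d \<in> opt_strategies Q r \<beta> mbar" using unique by simp
  have strict: "bellman_term Q r mbar (vec_nth W) i b < bellman_term Q r mbar (vec_nth W) i (d i)"
    if "b \<noteq> d i" for i b
  proof (rule ccontr)
    assume "\<not> ?thesis"
    then have le: "bellman_term Q r mbar (vec_nth W) i (d i) \<le> bellman_term Q r mbar (vec_nth W) i b" by simp
    have "\<forall>c. bellman_term Q r mbar (vec_nth W) i c \<le> bellman_term Q r mbar (vec_nth W) i (d i)"
      using dopt oW unfolding opt_strategies_def opt_actions_def by auto
    then have "b \<in> opt_actions Q r \<beta> mbar i" using le oW unfolding opt_actions_def by (auto intro: order_trans)
    then have "d(i := b) \<in> opt_strategies Q r \<beta> mbar" using dopt unfolding opt_strategies_def by auto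
    then have "d(i := b) = d" using unique by simp
    then show False using that by (metis fun_upd_same)
  qed
  have ev_strict: "eventually (\<lambda>m. \<forall>i b. b \<noteq> d i \<longrightarrow>
      bellman_term Q r m (opt_value Q r \<beta> m) i b < bellman_term Q r m (opt_value Q r \<beta> m) i (d i)) F"
  proof (intro eventually_all_finite)
    fix i b
    show "eventually (\<lambda>m. b \<noteq> d i \<longrightarrow>
      bellman_term Q r m (opt_value Q r \<beta> m) i b < bellman_term Q r m (opt_value Q r \<beta> m) i (d i)) F"
    proof (cases "b = d i")
      case True then show ?thesis by simp
    next
      case False
      have "((\<lambda>m. bellman_term Q r m (opt_value Q r \<beta> m) i (d i) - bellman_term Q r m (opt_value Q r \<beta> m) i b)
          \<longlongrightarrow> bellman_term Q r mbar (vec_nth W) i (d i) - bellman_term Q r mbar (vec_nth W) i b) F"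
        by (intro tendsto_diff B_lim)
      moreover have "bellman_term Q r mbar (vec_nth W) i (d i) - bellman_term Q r mbar (vec_nth W) i b > 0"
        using strict[OF False] by simp
      ultimately have "eventually (\<lambda>m. bellman_term Q r m (opt_value Q r \<beta> m) i (d i) - bellman_term Q r m (opt_value Q r \<beta> m) i b > 0) F"
        by (rule order_tendstoD(1))
      then show ?thesis by (rule eventually_mono) simp
    qed
  qed
  have concl: "opt_strategies Q r \<beta> m = {d}"
    if h: "\<forall>i b. b \<noteq> d i \<longrightarrow>
      bellman_term Q r m (opt_value Q r \<beta> m) i b < bellman_term Q r m (opt_value Q r \<beta> m) i (d i)" for m
  proof -
    have "opt_actions Q r \<beta> m i = {d i}" for i
    proof
      show "opt_actions Q r \<beta> m i \<subseteq> {d i}"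
        using h unfolding opt_actions_def by (auto simp: not_le[symmetric])
      show "{d i} \<subseteq> opt_actions Q r \<beta> m i"
        unfolding opt_actions_def
      proof (clarsimp)
        fix b show "bellman_term Q r m (opt_value Q r \<beta> m) i b \<le> bellman_term Q r m (opt_value Q r \<beta> m) i (d i)"
          using h by (cases "b = d i") (auto intro: less_imp_le)
      qed
    qed
    then show ?thesis unfolding opt_strategies_def by auto
  qed
  obtain e where e: "e > 0" and he: "\<And>x. x \<in> prob_simplex \<Longrightarrow> x \<noteq> mbar \<Longrightarrow> dist x mbar < e \<Longrightarrow>
      (\<forall>i b. b \<noteq> d i \<longrightarrow> bellman_term Q r x (opt_value Q r \<beta> x) i b < bellman_term Q r x (opt_value Q r \<beta> x) i (d i))"
    using ev_strict unfolding F_def eventually_at by blast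
  show ?thesis
  proof (intro exI[of _ e] conjI ballI impI)
    show "e > 0" by fact
  next
    fix m' assume m': "m' \<in> prob_simplex" "norm (m' - mbar) < e"
    show "opt_strategies Q r \<beta> m' = {d}"
    proof (cases "m' = mbar")
      case True then show ?thesis using unique by simp
    next
      case False then show ?thesis using he[OF m'(1) False] m'(2) concl by (simp add: dist_norm)
    qed
  qed
qed

end
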